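(* Consider the chain pendulum on a cart described in the context, with configuration $(q_1,\dots,q_n,x)\in(\mathsf{S}^2)^n\times\mathbb{R}^2$, Lagrangian $L=T-V$, and a horizontal control force $u\in\mathbb{R}^2$ acting on the cart. The Euler–Lagrange equations of this system on $(\mathsf{S}^2)^n\times\mathbb{R}^2$ (obtained from the Lagrange–d'Alembert principle, with variations $\delta q_i=\xi_i\times q_i$, $\xi_i\cdot q_i=0$, and virtual work $u\cdot\delta x$) are \[ M_{00}\ddot x+\sum_{j=1}^n M_{0j}\ddot q_j=u, \] and, for each $i=1,\dots,n$, \[ -\hat q_i^2 M_{i0}\ddot x+M_{ii}\ddot q_i-\sum_{j\neq i}M_{ij}\hat q_i^2\ddot q_j=-\|\dot q_i\|^2M_{ii}q_i-\Big(\sum_{a=i}^n m_a\Big)g\,l_i\,\hat q_i^2e_3 . \] Equivalently, in terms of the angular velocities $\omega_i\in\mathbb{R}^3$ (with $\omega_i\cdot q_i=0$), they can be written as \[ M_{00}\ddot x-\sum_{j=1}^n M_{0j}\hat q_j\dot\omega_j=\sum_{j=1}^n M_{0j}\|\omega_j\|^2q_j+u, \] \[ \hat q_iM_{i0}\ddot x+M_{ii}\dot\omega_i-\sum_{j\neq i}M_{ij}\hat q_i\hat q_j\dot\omega_j=\sum_{j\neq i}M_{ij}\|\omega_j\|^2\hat q_iq_j+\Big(\sum_{a=i}^n m_a\Big)g\,l_i\,\hat q_ie_3,\quad i=1,\dots,n, \] \[ \dot q_i=\omega_i\times q_i,\quad i=1,\dots,n. \]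
   Context: Let $n\ge1$. $\mathsf{S}^2=\{q\in\mathbb{R}^3:\|q\|=1\}$. Let $e_1,e_2,e_3$ be the standard basis of $\mathbb{R}^3$, with $e_3$ the direction of gravity, $g>0$ the gravitational acceleration, and $C=[e_1,e_2]\in\mathbb{R}^{3\times2}$. For $y\in\mathbb{R}^3$, $\hat y$ denotes the $3\times3$ skew-symmetric matrix with $\hat y z=y\times z$ for all $z\in\mathbb{R}^3$. A cart of mass $m>0$ moves in a horizontal plane, with position $x\in\mathbb{R}^2$ (so its inertial position is $Cx$). A serial chain of $n$ massless links joined by spherical joints is attached to the cart; link $i$ has length $l_i>0$, unit direction vector $q_i\in\mathsf{S}^2$, and a point mass $m_i>0$ at its outboard end, whose position is $x_i=Cx+\sum_{a=1}^i l_aq_a$. The angular velocity $\omega_i\in\mathbb{R}^3$ of link $i$ satisfies $\dot q_i=\omega_i\times q_i$, $\omega_i\cdot q_i=0$. Define $M_{00}=m+\sum_{i=1}^n m_i\in\mathbb{R}$, $M_{0i}=\big(\sum_{a=i}^n m_a\big)l_i\,C^T\in\mathbb{R}^{2\times3}$, $M_{i0}=M_{0i}^T$, and $M_{ij}=\big(\sum_{a=\max\{i,j\}}^n m_a\big)l_il_j\in\mathbb{R}$ for $i,j=1,\dots,n$. The kinetic energy is $T=\tfrac12M_{00}\|\dot x\|^2+\dot x\cdot\sum_{i=1}^nM_{0i}\dot q_i+\tfrac12\sum_{i,j=1}^nM_{ij}\dot q_i\cdot\dot q_j$, the potential energy is $V=-\sum_{i=1}^n\big(\sum_{a=i}^n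 m_a\big)g\,l_i\,e_3\cdot q_i$, and $L=T-V$. A control force $u\in\mathbb{R}^2$ acts on the cart. *)

theory Defs
  imports "HOL-Analysis.Analysis"
begin

text \<open>Parameters: cart mass m, bob masses mm i,
  link lengths l i, gravity g, number of links n (links indexed 1..n).\<close>

definition mu :: "(nat \<Rightarrow> real) \<Rightarrow> nat \<Rightarrow> nat \<Rightarrow> real" where
  "mu mm n i = (\<Sum>a=i..n. mm a)"

definition CC :: "real^2 \<Rightarrow> real^3" where
  "CC v = vector [v$1, v$2, 0]"

definition CT :: "real^3 \<Rightarrow> real^2" where
  "CT w = vector [w$1, w$2]"

definition e3 :: "real^3" where
  "e3 = vector [0, 0, 1]"

definition hat :: "real^3 \<Rightarrow> real^3 \<Rightarrow> real^3" where
  "hat y z = cross3 y z"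

definition M00 :: "real \<Rightarrow> (nat \<Rightarrow> real) \<Rightarrow> nat \<Rightarrow> real" where
  "M00 m mm n = m + (\<Sum>i=1..n. mm i)"

text \<open>M_{0i} applied to a vector in R^3 (a 2x3 matrix) and M_{i0} applied to a vector in R^2\<close>
definition M0 :: "(nat \<Rightarrow> real) \<Rightarrow> (nat \<Rightarrow> real) \<Rightarrow> nat \<Rightarrow> nat \<Rightarrow> real^3 \<Rightarrow> real^2" where
  "M0 mm l n i w = (mu mm n i * l i) *\<^sub>R CT w"

definition M0' :: "(nat \<Rightarrow> real) \<Rightarrow> (nat \<Rightarrow> real) \<Rightarrow> nat \<Rightarrow> nat \<Rightarrow> real^2 \<Rightarrow> real^3" where
  "M0' mm l n i v = (mu mm n i * l i) *\<^sub>R CC v"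

definition MM :: "(nat \<Rightarrow> real) \<Rightarrow> (nat \<Rightarrow> real) \<Rightarrow> nat \<Rightarrow> nat \<Rightarrow> nat \<Rightarrow> real" where
  "MM mm l n i j = mu mm n (max i j) * l i * l j"

text \<open>Lagrangian L = T - V as a function on the ambient space
  (x, q_1..q_n, xdot, qdot_1..qdot_n).\<close>
definition Lag :: "real \<Rightarrow> (nat \<Rightarrow> real) \<Rightarrow> (nat \<Rightarrow> real) \<Rightarrow> real \<Rightarrow> nat \<Rightarrow>
    real^2 \<Rightarrow> (nat \<Rightarrow> real^3) \<Rightarrow> real^2 \<Rightarrow> (nat \<Rightarrow> real^3) \<Rightarrow> real" where
  "Lag m mm l g n X Q Xd Qd =
     (1/2) * M00 m mm n * (norm Xd)^2
     + Xd \<bullet> (\<Sum>i=1..n. M0 mm l n i (Qd i))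
     + (1/2) * (\<Sum>i=1..n. \<Sum>j=1..n. MM mm l n i j * (Qd i \<bullet> Qd j))
     - (- (\<Sum>i=1..n. mu mm n i * g * l i * (e3 \<bullet> Q i)))"

text \<open>Lagrange-d'Alembert principle along the trajectory (q, x) with velocities q', x'
  and control u: for every time interval [a,b] and all C^1 variations
  delta q_i = xi_i \<times> q_i (xi_i \<bullet> q_i = 0) and delta x, vanishing at a and b,
  delta (integral of L) + integral of u \<bullet> delta x = 0.\<close>
definition LdA :: "real \<Rightarrow> (nat \<Rightarrow> real) \<Rightarrow> (nat \<Rightarrow> real) \<Rightarrow> real \<Rightarrow> nat \<Rightarrow>
    (nat \<Rightarrow> real \<Rightarrow> real^3) \<Rightarrow> (nat \<Rightarrow> real \<Rightarrow> real^3) \<Rightarrow>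
    (real \<Rightarrow> real^2) \<Rightarrow> (real \<Rightarrow> real^2) \<Rightarrow> (real \<Rightarrow> real^2) \<Rightarrow> bool" where
  "LdA m mm l g n q q' x x' u \<longleftrightarrow>
    (\<forall>a b. a < b \<longrightarrow>
      (\<forall>(\<xi>::nat \<Rightarrow> real \<Rightarrow> real^3) \<xi>' (dx::real \<Rightarrow> real^2) dx'.
        (\<forall>i\<in>{1..n}. \<forall>t. (\<xi> i has_vector_derivative \<xi>' i t) (at t)) \<and>
        (\<forall>i\<in>{1..n}. continuous_on UNIV (\<xi>' i)) \<and>
        (\<forall>t. (dx has_vector_derivative dx' t) (at t)) \<and> continuous_on UNIV dx' \<and>
        (\<forall>i\<in>{1..n}. \<forall>t\<in>{a..b}. \<xi> i t \<bullet> q i t = 0) \<and>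
        (\<forall>i\<in>{1..n}. \<xi> i a = 0 \<and> \<xi> i b = 0) \<and> dx a = 0 \<and> dx b = 0
        \<longrightarrow>
        integral {a..b} (\<lambda>t.
            deriv (\<lambda>\<epsilon>. Lag m mm l g n
                (x t + \<epsilon> *\<^sub>R dx t)
                (\<lambda>i. q i t + \<epsilon> *\<^sub>R cross3 (\<xi> i t) (q i t))
                (x' t + \<epsilon> *\<^sub>R dx' t)
                (\<lambda>i. q' i t + \<epsilon> *\<^sub>R (cross3 (\<xi>' i t) (q i t) + cross3 (\<xi> i t) (q' i t)))) 0
            + u t \<bullet> dx t) = 0))"

definition EL1 :: "real \<Rightarrow> (nat \<Rightarrow> real) \<Rightarrow> (nat \<Rightarrow> real) \<Rightarrow> real \<Rightarrow> nat \<Rightarrow>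
    (nat \<Rightarrow> real \<Rightarrow> real^3) \<Rightarrow> (nat \<Rightarrow> real \<Rightarrow> real^3) \<Rightarrow> (nat \<Rightarrow> real \<Rightarrow> real^3) \<Rightarrow>
    (real \<Rightarrow> real^2) \<Rightarrow> (real \<Rightarrow> real^2) \<Rightarrow> real \<Rightarrow> bool" where
  "EL1 m mm l g n q q' q'' x'' u t \<longleftrightarrow>
    M00 m mm n *\<^sub>R x'' t + (\<Sum>j=1..n. M0 mm l n j (q'' j t)) = u t \<and>
    (\<forall>i\<in>{1..n}.
       - hat (q i t) (hat (q i t) (M0' mm l n i (x'' t)))
       + MM mm l n i i *\<^sub>R q'' i t
       - (\<Sum>j\<in>{1..n}-{i}. MM mm l n i j *\<^sub>R hat (q i t) (hat (q i t) (q'' j t)))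
     = - ((norm (q' i t))^2 * MM mm l n i i) *\<^sub>R q i t
       - (mu mm n i * g * l i) *\<^sub>R hat (q i t) (hat (q i t) e3))"

definition EL2 :: "real \<Rightarrow> (nat \<Rightarrow> real) \<Rightarrow> (nat \<Rightarrow> real) \<Rightarrow> real \<Rightarrow> nat \<Rightarrow>
    (nat \<Rightarrow> real \<Rightarrow> real^3) \<Rightarrow> (nat \<Rightarrow> real \<Rightarrow> real^3) \<Rightarrow>
    (nat \<Rightarrow> real \<Rightarrow> real^3) \<Rightarrow> (nat \<Rightarrow> real \<Rightarrow> real^3) \<Rightarrow>
    (real \<Rightarrow> real^2) \<Rightarrow> (real \<Rightarrow> real^2) \<Rightarrow> real \<Rightarrow> bool" where
  "EL2 m mm l g n q q' w w' x'' u t \<longleftrightarrow>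
    M00 m mm n *\<^sub>R x'' t - (\<Sum>j=1..n. M0 mm l n j (hat (q j t) (w' j t)))
      = (\<Sum>j=1..n. M0 mm l n j ((norm (w j t))^2 *\<^sub>R q j t)) + u t \<and>
    (\<forall>i\<in>{1..n}.
       hat (q i t) (M0' mm l n i (x'' t))
       + MM mm l n i i *\<^sub>R w' i t
       - (\<Sum>j\<in>{1..n}-{i}. MM mm l n i j *\<^sub>R hat (q i t) (hat (q j t) (w' j t)))
     = (\<Sum>j\<in>{1..n}-{i}. (MM mm l n i j * (norm (w j t))^2) *\<^sub>R hat (q i t) (q j t))
       + (mu mm n i * g * l i) *\<^sub>R hat (q i t) e3) \<and>
    (\<forall>i\<in>{1..n}. q' i t = cross3 (w i t) (q i t))"

end

theory Submission
  imports Defs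
begin


lemma bb_cross: "bounded_bilinear cross3"
  using bilinear_conv_bounded_bilinear bilinear_cross by blast

lemma CT_lin: "bounded_linear CT"
  apply (rule linear_conv_bounded_linear[THEN iffD1])
  apply (rule linearI) by (auto simp: CT_def vec_eq_iff forall_2 vector_def)

lemma CC_lin: "bounded_linear CC"
  apply (rule linear_conv_bounded_linear[THEN iffD1])
  apply (rule linearI) by (auto simp: CC_def vec_eq_iff forall_3 vector_def)

lemma CT_CC: "v \<bullet> CT w = CC v \<bullet> w"
  by (simp add: CT_def CC_def inner_vec_def sum_2 sum_3 vector_def)

lemma M0_lin: "bounded_linear (M0 mm l n i)"
  unfolding M0_def[abs_def] by (rule bounded_linear_compose[OF bounded_linear_scaleR_right CT_lin]) 

lemma M0_scale: "M0 mm l n i (c *\<^sub>R v) = c *\<^sub>R M0 mm l n i v"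
  by (simp add: M0_def CT_def vec_eq_iff forall_2 vector_def)

lemma Lag_deriv:
  "((\<lambda>e. Lag m mm l g n (X + e *\<^sub>R dX) (\<lambda>i. Q i + e *\<^sub>R dQ i) (Xd + e *\<^sub>R dXd) (\<lambda>i. Qd i + e *\<^sub>R dQd i))
     has_real_derivative
     (M00 m mm n * (Xd \<bullet> dXd) + dXd \<bullet> (\<Sum>i=1..n. M0 mm l n i (Qd i)) + Xd \<bullet> (\<Sum>i=1..n. M0 mm l n i (dQd i))
      + (1/2) * (\<Sum>i=1..n. \<Sum>j=1..n. MM mm l n i j * (Qd i \<bullet> dQd j + dQd i \<bullet> Qd j))
      + (\<Sum>i=1..n. mu mm n i * g * l i * (e3 \<bullet> dQ i)))) (at 0)"
  unfolding Lag_def has_field_derivative_def power2_norm_eq_inner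
  apply (rule derivative_eq_intros bounded_linear.has_derivative[OF M0_lin] | simp)+
  apply (simp add: fun_eq_iff M0_scale flip: scaleR_sum_right)
  apply (simp add: inner_commute[of dXd] mult.left_commute[of _ e] flip: sum_distrib_left)
  apply (simp add: sum_distrib_left algebra_simps sum.distrib)
  done



lemma cross_cross: "cross3 q (cross3 q v) = (q \<bullet> v) *\<^sub>R q - (q \<bullet> q) *\<^sub>R v"
  by (simp add: cross3_simps forall_3)

lemma triple: "a \<bullet> cross3 b c = b \<bullet> cross3 c a"
  by (simp add: cross3_simps)

lemma triple2: "z \<bullet> cross3 (cross3 y z) y = cross3 y z \<bullet> cross3 y z"
  by (simp add: cross3_simps)

lemma cc_zero: assumes "q \<bullet> q = 1"
  shows "cross3 q (cross3 q v) = 0 \<longleftrightarrow> cross3 q v = 0"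
proof
  assume h: "cross3 q (cross3 q v) = 0"
  hence "v = (q \<bullet> v) *\<^sub>R q" using assms by (simp add: cross_cross)
  hence "cross3 q v = (q \<bullet> v) *\<^sub>R cross3 q q" by (metis cross_mult_right)
  thus "cross3 q v = 0" by simp
qed simp

lemma poly_int: fixes a b :: real assumes "a \<le> b"
  shows "((\<lambda>t. (t - a) * (b - t)) has_integral (b - a)^3 / 6) {a..b}"
proof -
  define G where "G = (\<lambda>t::real. (a+b)*t^2/2 - a*b*t - t^3/3)"
  have "((\<lambda>t. (t - a) * (b - t)) has_integral (G b - G a)) {a..b}"
    unfolding G_def
    apply (rule fundamental_theorem_of_calculus[OF assms])
    apply (rule has_real_derivative_iff_has_vector_derivative[THEN iffD1])
    apply (rule derivative_eq_intros refl | simp)+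
    by (simp add: algebra_simps power2_eq_square)
  moreover have "G b - G a = (b-a)^3/6"
    by (simp add: G_def field_simps power3_eq_cube power2_eq_square)
  ultimately show ?thesis by simp
qed

lemma FL:
  fixes h :: "real \<Rightarrow> real"
  assumes cont: "continuous_on UNIV h"
    and I: "\<And>a b. a < b \<Longrightarrow> integral {a..b} (\<lambda>t. ((t - a) * (b - t)) * h t) = 0"
  shows "h t0 = 0"
proof (rule ccontr)
  assume ne: "h t0 \<noteq> 0"
  define c where "c = h t0"
  have "isCont h t0" using cont by (simp add: continuous_on_eq_continuous_at)
  then obtain d where d: "d > 0" "\<And>t. dist t t0 < d \<Longrightarrow> dist (h t) (h t0) < \<bar>c\<bar>/2"
    using ne unfolding c_def continuous_at_eps_delta by (metis zero_less_abs_iff half_gt_zero)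
  define a where "a = t0 - d/2"
  define b where "b = t0 + d/2"
  have ab: "a < b" using d by (simp add: a_def b_def)
  have pt: "c^2/2 * ((t - a) * (b - t)) \<le> c * (((t - a) * (b - t)) * h t)" if t: "t \<in> {a..b}" for t
  proof -
    have "dist t t0 < d" using t d by (auto simp: a_def b_def dist_real_def)
    hence "\<bar>h t - c\<bar> < \<bar>c\<bar>/2" using d(2) by (simp add: c_def dist_real_def)
    hence hc: "\<bar>h t - c\<bar> \<le> \<bar>c\<bar>/2" by simp
    have "\<bar>c * (h t - c)\<bar> = \<bar>c\<bar> * \<bar>h t - c\<bar>" by (rule abs_mult)
    also have "\<dots> \<le> \<bar>c\<bar> * (\<bar>c\<bar>/2)" by (rule mult_left_mono[OF hc]) simp
    also have "\<dots> = c^2/2" by (simp add: power2_eq_square abs_mult_self_eq flip: abs_mult)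
    finally have "\<bar>c * (h t - c)\<bar> \<le> c^2/2" .
    moreover have "c * h t = c^2 + c * (h t - c)" by (simp add: algebra_simps power2_eq_square)
    ultimately have "c^2/2 \<le> c * h t" by linarith
    moreover have "(t - a) * (b - t) \<ge> 0" using t by auto
    ultimately show ?thesis by (metis mult.left_commute mult_right_mono mult.commute)
  qed
  have ci: "continuous_on {a..b} (\<lambda>t. c * (((t - a) * (b - t)) * h t))"
    by (intro continuous_intros continuous_on_subset[OF cont]) auto
  have "integral {a..b} (\<lambda>t. c^2/2 * ((t - a) * (b - t))) \<le> integral {a..b} (\<lambda>t. c * (((t - a) * (b - t)) * h t))"
    by (rule integral_le[OF _ _ pt]) (auto intro!: integrable_continuous_interval ci continuous_intros)
  also have "\<dots> = c * integral {a..b} (\<lambda>t. ((t - a) * (b - t)) * h t)" by simp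
  also have "\<dots> = 0" using I[OF ab] by simp
  finally have le: "c^2/2 * ((b - a)^3/6) \<le> 0"
    using integral_unique[OF poly_int[of a b]] ab by simp
  have "c^2/2 * ((b - a)^3/6) > 0" using ne ab by (simp add: c_def)
  with le show False by simp
qed



lemma CC_scale: "CC (c *\<^sub>R v) = c *\<^sub>R CC v"
  by (simp add: CC_def vec_eq_iff forall_3 vector_def)
lemma M0'_lin: "bounded_linear (M0' mm l n i)"
  unfolding M0'_def[abs_def] by (rule bounded_linear_compose[OF bounded_linear_scaleR_right CC_lin])
lemma M0_adj: "v \<bullet> M0 mm l n i w = M0' mm l n i v \<bullet> w"
  by (simp add: M0_def M0'_def CT_CC)
lemma MM_sym: "MM mm l n i j = MM mm l n j i"
  by (simp add: MM_def max.commute)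

lemma vd_inner:
  "(f has_vector_derivative f') (at s within S) \<Longrightarrow> (g has_vector_derivative g') (at s within S) \<Longrightarrow>
   D = f s \<bullet> g' + f' \<bullet> g s \<Longrightarrow> ((\<lambda>s. f s \<bullet> g s) has_vector_derivative D) (at s within S)"
  using bounded_bilinear.has_vector_derivative[OF bounded_bilinear_inner] by blast
lemma vd_cross:
  "(f has_vector_derivative f') (at s within S) \<Longrightarrow> (g has_vector_derivative g') (at s within S) \<Longrightarrow>
   D = cross3 (f s) g' + cross3 f' (g s) \<Longrightarrow> ((\<lambda>s. cross3 (f s) (g s)) has_vector_derivative D) (at s within S)"
  using bounded_bilinear.has_vector_derivative[OF bb_cross] by blast
lemma vd_M0:
  "(f has_vector_derivative f') F \<Longrightarrow> ((\<lambda>s. M0 mm l n i (f s)) has_vector_derivative M0 mm l n i f') F"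
  using bounded_linear.has_vector_derivative[OF M0_lin] by blast
lemma vd_M0':
  "(f has_vector_derivative f') F \<Longrightarrow> ((\<lambda>s. M0' mm l n i (f s)) has_vector_derivative M0' mm l n i f') F"
  using bounded_linear.has_vector_derivative[OF M0'_lin] by blast
lemma vd_cscale:
  "(f has_vector_derivative f') F \<Longrightarrow> ((\<lambda>s. c *\<^sub>R f s) has_vector_derivative c *\<^sub>R f') F"
  using bounded_linear.has_vector_derivative[OF bounded_linear_scaleR_right] by blast

locale pend =
  fixes m g :: real and mm l :: "nat \<Rightarrow> real" and n :: nat
    and q q' q'' :: "nat \<Rightarrow> real \<Rightarrow> real^3"
    and x x' x'' u :: "real \<Rightarrow> real^2"
  assumes qn: "\<forall>i\<in>{1..n}. \<forall>t. norm (q i t) = 1"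
    and qd: "\<forall>i\<in>{1..n}. \<forall>t. (q i has_vector_derivative q' i t) (at t)"
    and qdd: "\<forall>i\<in>{1..n}. \<forall>t. (q' i has_vector_derivative q'' i t) (at t)"
    and qc: "\<forall>i\<in>{1..n}. continuous_on UNIV (q'' i)"
    and xd: "\<forall>t. (x has_vector_derivative x' t) (at t)"
    and xdd: "\<forall>t. (x' has_vector_derivative x'' t) (at t)"
    and xc: "continuous_on UNIV x''"
    and uc: "continuous_on UNIV u"
begin

definition "A t = M00 m mm n *\<^sub>R x'' t + (\<Sum>j=1..n. M0 mm l n j (q'' j t))"
definition "px t = M00 m mm n *\<^sub>R x' t + (\<Sum>j=1..n. M0 mm l n j (q' j t))"
definition "pq i t = M0' mm l n i (x' t) + (\<Sum>j=1..n. MM mm l n i j *\<^sub>R q' j t)"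
definition "pqd i t = M0' mm l n i (x'' t) + (\<Sum>j=1..n. MM mm l n i j *\<^sub>R q'' j t)"
definition "F i t = (mu mm n i * g * l i) *\<^sub>R e3 - pqd i t"
definition "Pd t dx dx' xi xi' = A t \<bullet> dx + px t \<bullet> dx' +
   (\<Sum>i=1..n. pqd i t \<bullet> cross3 (xi i) (q i t) + pq i t \<bullet> (cross3 (xi' i) (q i t) + cross3 (xi i) (q' i t)))"

lemma integrand_eq:
  "deriv (\<lambda>\<epsilon>. Lag m mm l g n (x t + \<epsilon> *\<^sub>R dx) (\<lambda>i. q i t + \<epsilon> *\<^sub>R cross3 (xi i) (q i t))
       (x' t + \<epsilon> *\<^sub>R dx') (\<lambda>i. q' i t + \<epsilon> *\<^sub>R (cross3 (xi' i) (q i t) + cross3 (xi i) (q' i t)))) 0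
     + u t \<bullet> dx
   = Pd t dx dx' xi xi' + ((u t - A t) \<bullet> dx + (\<Sum>i=1..n. F i t \<bullet> cross3 (xi i) (q i t)))"
proof -
  define dq where "dq i = cross3 (xi i) (q i t)" for i
  define dqd where "dqd i = cross3 (xi' i) (q i t) + cross3 (xi i) (q' i t)" for i
  have s1: "(\<Sum>i=1..n. \<Sum>j=1..n. MM mm l n i j * (q' i t \<bullet> dqd j + dqd i \<bullet> q' j t))
      = 2 * (\<Sum>i=1..n. \<Sum>j=1..n. MM mm l n i j * (q' j t \<bullet> dqd i))"
  proof -
    have "(\<Sum>i=1..n. \<Sum>j=1..n. MM mm l n i j * (q' i t \<bullet> dqd j))
        = (\<Sum>j=1..n. \<Sum>i=1..n. MM mm l n i j * (q' i t \<bullet> dqd j))" by (rule sum.swap)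
    also have "\<dots> = (\<Sum>i=1..n. \<Sum>j=1..n. MM mm l n i j * (q' j t \<bullet> dqd i))"
      by (simp add: MM_sym)
    finally show ?thesis
      by (simp add: distrib_left sum.distrib inner_commute[of "dqd _"])
  qed
  have s2: "x' t \<bullet> (\<Sum>i=1..n. M0 mm l n i (dqd i)) = (\<Sum>i=1..n. M0' mm l n i (x' t) \<bullet> dqd i)"
    by (simp add: inner_sum_right M0_adj)
  have d: "deriv (\<lambda>\<epsilon>. Lag m mm l g n (x t + \<epsilon> *\<^sub>R dx) (\<lambda>i. q i t + \<epsilon> *\<^sub>R dq i)
       (x' t + \<epsilon> *\<^sub>R dx') (\<lambda>i. q' i t + \<epsilon> *\<^sub>R dqd i)) 0 =
     M00 m mm n * (x' t \<bullet> dx') + dx' \<bullet> (\<Sum>i=1..n. M0 mm l n i (q' i t)) + x' t \<bullet> (\<Sum>i=1..n. M0 mm l n i (dqd i))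
      + (1/2) * (\<Sum>i=1..n. \<Sum>j=1..n. MM mm l n i j * (q' i t \<bullet> dqd j + dqd i \<bullet> q' j t))
      + (\<Sum>i=1..n. mu mm n i * g * l i * (e3 \<bullet> dq i))"
    by (rule DERIV_imp_deriv[OF Lag_deriv])
  have "Pd t dx dx' xi xi' + ((u t - A t) \<bullet> dx + (\<Sum>i=1..n. F i t \<bullet> cross3 (xi i) (q i t)))
      = u t \<bullet> dx + px t \<bullet> dx' + (\<Sum>i=1..n. pq i t \<bullet> dqd i) + (\<Sum>i=1..n. (pqd i t + F i t) \<bullet> dq i)"
    by (simp add: Pd_def dq_def dqd_def sum.distrib inner_add_left inner_diff_left algebra_simps)
  also have "\<dots> = u t \<bullet> dx + M00 m mm n * (x' t \<bullet> dx') + dx' \<bullet> (\<Sum>i=1..n. M0 mm l n i (q' i t))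
      + (\<Sum>i=1..n. M0' mm l n i (x' t) \<bullet> dqd i) + (\<Sum>i=1..n. \<Sum>j=1..n. MM mm l n i j * (q' j t \<bullet> dqd i))
      + (\<Sum>i=1..n. mu mm n i * g * l i * (e3 \<bullet> dq i))"
    by (simp add: px_def pq_def F_def inner_add_left inner_sum_left inner_commute[of dx'] sum.distrib)
  finally show ?thesis using d s1 s2 by (simp add: dq_def dqd_def)
qed

lemma q_cont: "i \<in> {1..n} \<Longrightarrow> continuous_on UNIV (q i)"
  by (rule continuous_on_vector_derivative[where f'="q' i"]) (use qd in auto)
lemma q'_cont: "i \<in> {1..n} \<Longrightarrow> continuous_on UNIV (q' i)"
  by (rule continuous_on_vector_derivative[where f'="q'' i"]) (use qdd in auto)
lemma M0_cont: "continuous_on S f \<Longrightarrow> continuous_on S (\<lambda>s. M0 mm l n i (f s))"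
  by (rule bounded_linear.continuous_on[OF M0_lin])
lemma M0'_cont: "continuous_on S f \<Longrightarrow> continuous_on S (\<lambda>s. M0' mm l n i (f s))"
  by (rule bounded_linear.continuous_on[OF M0'_lin])
lemma A_cont: "continuous_on UNIV A"
  unfolding A_def[abs_def] using qc xc by (intro continuous_on_add continuous_on_scaleR continuous_on_const continuous_on_sum M0_cont) auto
lemma F_cont: "continuous_on UNIV (F i)"
  unfolding F_def[abs_def] pqd_def using qc xc by (intro continuous_on_diff continuous_on_add continuous_on_scaleR continuous_on_const continuous_on_sum M0'_cont) auto

lemma px_deriv: "(px has_vector_derivative A t) (at t)"
  unfolding px_def[abs_def] A_def using qdd xdd
  by (intro has_vector_derivative_add vd_cscale has_vector_derivative_sum vd_M0) auto
lemma pq_deriv: "(pq i has_vector_derivative pqd i t) (at t)"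
  unfolding pq_def[abs_def] pqd_def using qdd xdd
  by (intro has_vector_derivative_add vd_cscale has_vector_derivative_sum vd_M0') auto

lemma P_deriv:
  assumes "\<forall>i\<in>{1..n}. (xi i has_vector_derivative xi' i t) (at t)" "(dx has_vector_derivative dx' t) (at t)"
  shows "((\<lambda>s. px s \<bullet> dx s + (\<Sum>i=1..n. pq i s \<bullet> cross3 (xi i s) (q i s))) has_vector_derivative
           Pd t (dx t) (dx' t) (\<lambda>i. xi i t) (\<lambda>i. xi' i t)) (at t)"
proof -
  have "((\<lambda>s. px s \<bullet> dx s + (\<Sum>i=1..n. pq i s \<bullet> cross3 (xi i s) (q i s))) has_vector_derivative
     (px t \<bullet> dx' t + A t \<bullet> dx t) + (\<Sum>i=1..n. pq i t \<bullet> (cross3 (xi i t) (q' i t) + cross3 (xi' i t) (q i t)) + pqd i t \<bullet> cross3 (xi i t) (q i t))) (at t)"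
  proof (rule has_vector_derivative_add)
    show "((\<lambda>s. px s \<bullet> dx s) has_vector_derivative (px t \<bullet> dx' t + A t \<bullet> dx t)) (at t)"
      by (rule vd_inner[OF px_deriv assms(2) refl])
    have "((\<lambda>s. pq i s \<bullet> cross3 (xi i s) (q i s)) has_vector_derivative
       (pq i t \<bullet> (cross3 (xi i t) (q' i t) + cross3 (xi' i t) (q i t)) + pqd i t \<bullet> cross3 (xi i t) (q i t))) (at t)"
      if "i \<in> {1..n}" for i
      using assms(1) qd that by (intro vd_inner[OF pq_deriv vd_cross refl] refl) auto
    then show "((\<lambda>s. \<Sum>i=1..n. pq i s \<bullet> cross3 (xi i s) (q i s)) has_vector_derivative
       (\<Sum>i=1..n. pq i t \<bullet> (cross3 (xi i t) (q' i t) + cross3 (xi' i t) (q i t)) + pqd i t \<bullet> cross3 (xi i t) (q i t))) (at t)"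
      by (rule has_vector_derivative_sum)
  qed
  moreover have "(px t \<bullet> dx' t + A t \<bullet> dx t) + (\<Sum>i=1..n. pq i t \<bullet> (cross3 (xi i t) (q' i t) + cross3 (xi' i t) (q i t)) + pqd i t \<bullet> cross3 (xi i t) (q i t))
     = Pd t (dx t) (dx' t) (\<lambda>i. xi i t) (\<lambda>i. xi' i t)"
    unfolding Pd_def by (simp add: algebra_simps)
  ultimately show ?thesis by simp
qed

lemma int_eq:
  fixes xi xi' :: "nat \<Rightarrow> real \<Rightarrow> real^3" and dx dx' :: "real \<Rightarrow> real^2"
  assumes ab: "a < b"
    and h1: "\<forall>i\<in>{1..n}. \<forall>t. (xi i has_vector_derivative xi' i t) (at t)"
    and h3: "\<forall>t. (dx has_vector_derivative dx' t) (at t)"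
    and h6: "\<forall>i\<in>{1..n}. xi i a = 0 \<and> xi i b = 0" and h7: "dx a = 0" "dx b = 0"
    and Rint: "(\<lambda>t. (u t - A t) \<bullet> dx t + (\<Sum>i=1..n. F i t \<bullet> cross3 (xi i t) (q i t))) integrable_on {a..b}"
  shows "integral {a..b} (\<lambda>t.
            deriv (\<lambda>\<epsilon>. Lag m mm l g n
                (x t + \<epsilon> *\<^sub>R dx t)
                (\<lambda>i. q i t + \<epsilon> *\<^sub>R cross3 (xi i t) (q i t))
                (x' t + \<epsilon> *\<^sub>R dx' t)
                (\<lambda>i. q' i t + \<epsilon> *\<^sub>R (cross3 (xi' i t) (q i t) + cross3 (xi i t) (q' i t)))) 0
            + u t \<bullet> dx t)
       = integral {a..b} (\<lambda>t. (u t - A t) \<bullet> dx t + (\<Sum>i=1..n. F i t \<bullet> cross3 (xi i t) (q i t)))"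
proof -
  define P where "P s = px s \<bullet> dx s + (\<Sum>i=1..n. pq i s \<bullet> cross3 (xi i s) (q i s))" for s
  have PD: "(P has_vector_derivative Pd t (dx t) (dx' t) (\<lambda>i. xi i t) (\<lambda>i. xi' i t)) (at t)" for t
    unfolding P_def[abs_def] by (rule P_deriv) (use h1 h3 in auto)
  have "((\<lambda>t. Pd t (dx t) (dx' t) (\<lambda>i. xi i t) (\<lambda>i. xi' i t)) has_integral (P b - P a)) {a..b}"
    by (rule fundamental_theorem_of_calculus[where f=P]) (use ab PD in \<open>auto intro: has_vector_derivative_at_within\<close>)
  moreover have "P b - P a = 0" using h6 h7 by (simp add: P_def)
  ultimately have "((\<lambda>t. Pd t (dx t) (dx' t) (\<lambda>i. xi i t) (\<lambda>i. xi' i t)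
      + ((u t - A t) \<bullet> dx t + (\<Sum>i=1..n. F i t \<bullet> cross3 (xi i t) (q i t))))
      has_integral (0 + integral {a..b} (\<lambda>t. (u t - A t) \<bullet> dx t + (\<Sum>i=1..n. F i t \<bullet> cross3 (xi i t) (q i t))))) {a..b}"
    using Rint by (intro has_integral_add) auto
  then show ?thesis by (simp add: integrand_eq integral_unique)
qed

end


context pend begin

lemma diff_lemma: "(a::'a::ab_group_add) - b = c \<Longrightarrow> (c = 0 \<longleftrightarrow> d) \<Longrightarrow> (a = b \<longleftrightarrow> d)"
  by auto

lemma bac: "cross3 a (cross3 b c) = (a \<bullet> c) *\<^sub>R b - (a \<bullet> b) *\<^sub>R c"
  by (simp add: cross3_simps forall_3)

lemma qq: "i \<in> {1..n} \<Longrightarrow> q i t \<bullet> q i t = 1"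
  using qn by (simp add: norm_eq_1)

lemma qq': assumes i: "i \<in> {1..n}" shows "q i t \<bullet> q' i t = 0"
proof -
  have "((\<lambda>s. q i s \<bullet> q i s) has_vector_derivative (q i t \<bullet> q' i t + q' i t \<bullet> q i t)) (at t)"
    using qd i by (intro vd_inner refl) auto
  moreover have "(\<lambda>s. q i s \<bullet> q i s) = (\<lambda>s. 1)" using qq[OF i] by auto
  ultimately have "((\<lambda>s. 1::real) has_vector_derivative (q i t \<bullet> q' i t + q' i t \<bullet> q i t)) (at t)" by simp
  hence "q i t \<bullet> q' i t + q' i t \<bullet> q i t = 0"
    using vector_derivative_unique_at has_vector_derivative_const by blast
  thus ?thesis by (simp add: inner_commute)
qed

lemma qq'': assumes i: "i \<in> {1..n}" shows "q i t \<bullet> q'' i t = - (q' i t \<bullet> q' i t)"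
proof -
  have "((\<lambda>s. q i s \<bullet> q' i s) has_vector_derivative (q i t \<bullet> q'' i t + q' i t \<bullet> q' i t)) (at t)"
    using qd qdd i by (intro vd_inner refl) auto
  moreover have "(\<lambda>s. q i s \<bullet> q' i s) = (\<lambda>s. 0)" using qq'[OF i] by auto
  ultimately have "((\<lambda>s. 0::real) has_vector_derivative (q i t \<bullet> q'' i t + q' i t \<bullet> q' i t)) (at t)" by simp
  hence "q i t \<bullet> q'' i t + q' i t \<bullet> q' i t = 0"
    using vector_derivative_unique_at has_vector_derivative_const by blast
  thus ?thesis by simp
qed

lemmas cross_lin = bounded_bilinear.diff_right[OF bb_cross] bounded_bilinear.add_right[OF bb_cross]
  bounded_bilinear.sum_right[OF bb_cross] cross_mult_right bounded_bilinear.minus_right[OF bb_cross]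

lemma EL1_i:
  assumes i: "i \<in> {1..n}"
  shows "(- hat (q i t) (hat (q i t) (M0' mm l n i (x'' t)))
       + MM mm l n i i *\<^sub>R q'' i t
       - (\<Sum>j\<in>{1..n}-{i}. MM mm l n i j *\<^sub>R hat (q i t) (hat (q i t) (q'' j t))))
     - (- ((norm (q' i t))^2 * MM mm l n i i) *\<^sub>R q i t
       - (mu mm n i * g * l i) *\<^sub>R hat (q i t) (hat (q i t) e3))
     = cross3 (q i t) (cross3 (q i t) (F i t))"
proof -
  have fin: "finite {1..n}" by simp
  have cc: "cross3 (q i t) (cross3 (q i t) (q'' i t)) = (- ((norm (q' i t))^2)) *\<^sub>R q i t - q'' i t"
    using qq[OF i] qq''[OF i] by (simp add: cross_cross power2_norm_eq_inner)
  have "cross3 (q i t) (cross3 (q i t) (F i t)) =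
      (mu mm n i * g * l i) *\<^sub>R cross3 (q i t) (cross3 (q i t) e3)
      - cross3 (q i t) (cross3 (q i t) (M0' mm l n i (x'' t)))
      - (\<Sum>j=1..n. MM mm l n i j *\<^sub>R cross3 (q i t) (cross3 (q i t) (q'' j t)))"
    by (simp add: F_def pqd_def cross_lin)
  also have "(\<Sum>j=1..n. MM mm l n i j *\<^sub>R cross3 (q i t) (cross3 (q i t) (q'' j t)))
     = MM mm l n i i *\<^sub>R cross3 (q i t) (cross3 (q i t) (q'' i t))
       + (\<Sum>j\<in>{1..n}-{i}. MM mm l n i j *\<^sub>R cross3 (q i t) (cross3 (q i t) (q'' j t)))"
    by (rule sum.remove[OF fin i])
  finally show ?thesis unfolding hat_def cc by (simp add: algebra_simps)
qed

lemma EL1_iff: "EL1 m mm l g n q q' q'' x'' u t \<longleftrightarrow> A t = u t \<and> (\<forall>i\<in>{1..n}. cross3 (q i t) (F i t) = 0)"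
proof -
  have "(\<forall>i\<in>{1..n}.
       - hat (q i t) (hat (q i t) (M0' mm l n i (x'' t)))
       + MM mm l n i i *\<^sub>R q'' i t
       - (\<Sum>j\<in>{1..n}-{i}. MM mm l n i j *\<^sub>R hat (q i t) (hat (q i t) (q'' j t)))
     = - ((norm (q' i t))^2 * MM mm l n i i) *\<^sub>R q i t
       - (mu mm n i * g * l i) *\<^sub>R hat (q i t) (hat (q i t) e3)) \<longleftrightarrow>
      (\<forall>i\<in>{1..n}. cross3 (q i t) (F i t) = 0)"
  proof (intro ball_cong refl)
    fix i assume i: "i \<in> {1..n}"
    show "(- hat (q i t) (hat (q i t) (M0' mm l n i (x'' t)))
       + MM mm l n i i *\<^sub>R q'' i t
       - (\<Sum>j\<in>{1..n}-{i}. MM mm l n i j *\<^sub>R hat (q i t) (hat (q i t) (q'' j t)))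
     = - ((norm (q' i t))^2 * MM mm l n i i) *\<^sub>R q i t
       - (mu mm n i * g * l i) *\<^sub>R hat (q i t) (hat (q i t) e3)) \<longleftrightarrow> cross3 (q i t) (F i t) = 0"
      by (rule diff_lemma[OF EL1_i[OF i] cc_zero[OF qq[OF i]]])
  qed
  thus ?thesis unfolding EL1_def A_def by simp
qed

lemma M0_diff: "M0 mm l n i (a - b) = M0 mm l n i a - M0 mm l n i b"
  by (simp add: M0_def CT_def vec_eq_iff forall_2 vector_def algebra_simps)
lemma M0_minus: "M0 mm l n i (- a) = - M0 mm l n i a"
  by (simp add: M0_def CT_def vec_eq_iff forall_2 vector_def algebra_simps)

lemma qcc: "i \<in> {1..n} \<Longrightarrow> cross3 (q i t) (cross3 (q i t) (q'' i t)) = (- ((norm (q' i t))^2)) *\<^sub>R q i t - q'' i t"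
  using qq qq'' by (simp add: cross_cross power2_norm_eq_inner)

lemma nw: "i \<in> {1..n} \<Longrightarrow> (norm (cross3 (q i t) (q' i t)))^2 = (norm (q' i t))^2"
  using norm_cross_dot[of "q i t" "q' i t"] qq'[of i t] qn by simp

lemma EL2_iff:
  assumes hw: "\<forall>i\<in>{1..n}. w i t = cross3 (q i t) (q' i t)"
    and hw': "\<forall>i\<in>{1..n}. w' i t = cross3 (q i t) (q'' i t)"
  shows "EL2 m mm l g n q q' w w' x'' u t \<longleftrightarrow> A t = u t \<and> (\<forall>i\<in>{1..n}. cross3 (q i t) (F i t) = 0)"
proof -
  have s1: "(\<Sum>j=1..n. M0 mm l n j (hat (q j t) (w' j t))) =
      (\<Sum>j=1..n. - ((norm (q' j t))^2 *\<^sub>R M0 mm l n j (q j t)) - M0 mm l n j (q'' j t))"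
    by (rule sum.cong[OF refl]) (simp add: hat_def hw' qcc M0_diff M0_scale M0_minus)
  have s2: "(\<Sum>j=1..n. M0 mm l n j ((norm (w j t))^2 *\<^sub>R q j t)) =
      (\<Sum>j=1..n. (norm (q' j t))^2 *\<^sub>R M0 mm l n j (q j t))"
    by (rule sum.cong[OF refl]) (simp add: hw nw M0_scale)
  have c1: "M00 m mm n *\<^sub>R x'' t - (\<Sum>j=1..n. M0 mm l n j (hat (q j t) (w' j t)))
      = (\<Sum>j=1..n. M0 mm l n j ((norm (w j t))^2 *\<^sub>R q j t)) + u t \<longleftrightarrow> A t = u t"
    by (rule diff_lemma[where c="A t - u t"]) (unfold s1 s2 A_def, simp_all add: sum_subtractf sum_negf algebra_simps)
  have c2: "(hat (q i t) (M0' mm l n i (x'' t))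
       + MM mm l n i i *\<^sub>R w' i t
       - (\<Sum>j\<in>{1..n}-{i}. MM mm l n i j *\<^sub>R hat (q i t) (hat (q j t) (w' j t)))
     = (\<Sum>j\<in>{1..n}-{i}. (MM mm l n i j * (norm (w j t))^2) *\<^sub>R hat (q i t) (q j t))
       + (mu mm n i * g * l i) *\<^sub>R hat (q i t) e3) \<longleftrightarrow> cross3 (q i t) (F i t) = 0"
    if i: "i \<in> {1..n}" for i
  proof -
    have fin: "finite {1..n}" by simp
    have s3: "(\<Sum>j\<in>{1..n}-{i}. MM mm l n i j *\<^sub>R hat (q i t) (hat (q j t) (w' j t))) =
       (\<Sum>j\<in>{1..n}-{i}. (- (MM mm l n i j * (norm (q' j t))^2)) *\<^sub>R cross3 (q i t) (q j t)
             - MM mm l n i j *\<^sub>R cross3 (q i t) (q'' j t))"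
      by (rule sum.cong[OF refl]) (simp add: hat_def hw' qcc cross_lin scaleR_right_diff_distrib)
    have s4: "(\<Sum>j\<in>{1..n}-{i}. (MM mm l n i j * (norm (w j t))^2) *\<^sub>R hat (q i t) (q j t)) =
       (\<Sum>j\<in>{1..n}-{i}. (MM mm l n i j * (norm (q' j t))^2) *\<^sub>R cross3 (q i t) (q j t))"
      by (rule sum.cong[OF refl]) (simp add: hat_def hw nw)
    have s5: "cross3 (q i t) (F i t) = (mu mm n i * g * l i) *\<^sub>R cross3 (q i t) e3
        - cross3 (q i t) (M0' mm l n i (x'' t))
        - (MM mm l n i i *\<^sub>R cross3 (q i t) (q'' i t) + (\<Sum>j\<in>{1..n}-{i}. MM mm l n i j *\<^sub>R cross3 (q i t) (q'' j t)))"
    proof -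
      have "cross3 (q i t) (F i t) = (mu mm n i * g * l i) *\<^sub>R cross3 (q i t) e3
        - cross3 (q i t) (M0' mm l n i (x'' t))
        - (\<Sum>j=1..n. MM mm l n i j *\<^sub>R cross3 (q i t) (q'' j t))"
        by (simp add: F_def pqd_def cross_lin)
      thus ?thesis by (simp only: sum.remove[OF fin i])
    qed
    show ?thesis
      by (rule diff_lemma[where c = "- cross3 (q i t) (F i t)"])
        (unfold s3 s4 s5, auto simp: hat_def hw'[rule_format, OF i] sum_subtractf sum_negf algebra_simps)
  qed
  have c3: "q' i t = cross3 (w i t) (q i t)" if i: "i \<in> {1..n}" for i
    using qq[OF i] qq'[OF i] hw i cross_skew[of "cross3 (q i t) (q' i t)" "q i t"]
    by (simp add: cross_cross)
  show ?thesis unfolding EL2_def using c1 c2 c3 by auto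
qed

end


context pend begin

lemma phi_deriv: "((\<lambda>s. (s - a) * (b - s)) has_real_derivative (a + b - 2 * s)) (at s)"
  by (rule derivative_eq_intros refl | simp add: algebra_simps)+

lemma LdA_to_A: assumes L: "LdA m mm l g n q q' x x' u" shows "A t0 = u t0"
proof -
  define c where "c = u t0 - A t0"
  define h where "h s = (u s - A s) \<bullet> c" for s
  have hc: "continuous_on UNIV h" unfolding h_def[abs_def] using uc A_cont
    by (intro continuous_on_inner continuous_on_diff continuous_on_const) auto
  have "h t0 = 0"
  proof (rule FL[OF hc])
    fix a b :: real assume ab: "a < b"
    define dx where "dx s = ((s - a) * (b - s)) *\<^sub>R c" for s
    define dx' where "dx' s = (a + b - 2 * s) *\<^sub>R c" for s
    have dxd: "(dx has_vector_derivative dx' s) (at s)" for s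
      using has_vector_derivative_scaleR[OF phi_deriv[of a b s] has_vector_derivative_const[of c]]
      by (simp add: dx_def[abs_def] dx'_def)
    have cdx': "continuous_on UNIV dx'" unfolding dx'_def[abs_def] by (intro continuous_intros)
    have e1: "integral {a..b} (\<lambda>t.
            deriv (\<lambda>\<epsilon>. Lag m mm l g n
                (x t + \<epsilon> *\<^sub>R dx t)
                (\<lambda>i. q i t + \<epsilon> *\<^sub>R cross3 0 (q i t))
                (x' t + \<epsilon> *\<^sub>R dx' t)
                (\<lambda>i. q' i t + \<epsilon> *\<^sub>R (cross3 0 (q i t) + cross3 0 (q' i t)))) 0
            + u t \<bullet> dx t) = 0"
      using L[unfolded LdA_def, rule_format, of a b "\<lambda>i s. 0" "\<lambda>i s. 0" dx dx'] ab dxd cdx'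
      by (simp add: dx_def)
    have R: "(u s - A s) \<bullet> dx s + (\<Sum>i=1..n. F i s \<bullet> cross3 0 (q i s)) = ((s - a) * (b - s)) * h s" for s
      by (simp add: dx_def h_def)
    have Rint: "(\<lambda>s. (u s - A s) \<bullet> dx s + (\<Sum>i=1..n. F i s \<bullet> cross3 0 (q i s))) integrable_on {a..b}"
      unfolding R using hc
      by (intro integrable_continuous_interval continuous_on_mult continuous_on_subset[OF hc] continuous_intros) auto
    have p1: "\<forall>i\<in>{1..n}. \<forall>t. ((\<lambda>s. 0::real^3) has_vector_derivative 0) (at t)" by simp
    have p2: "\<forall>i\<in>{1..n}. (0::real^3) = 0 \<and> (0::real^3) = 0" by simp
    have p3: "dx a = 0" "dx b = 0" by (simp_all add: dx_def)
    note e2 = int_eq[of a b "\<lambda>i s. 0" "\<lambda>i s. 0" dx dx', OF ab p1 allI[OF dxd] p2 p3 Rint]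
    from e1 e2 show "integral {a..b} (\<lambda>t. ((t - a) * (b - t)) * h t) = 0"
      by (simp add: dx_def h_def)
  qed
  thus ?thesis by (simp add: h_def c_def)
qed

lemma LdA_to_F: assumes L: "LdA m mm l g n q q' x x' u" and i0: "i0 \<in> {1..n}"
  shows "cross3 (q i0 t0) (F i0 t0) = 0"
proof -
  define c where "c = F i0 t0"
  define h where "h s = F i0 s \<bullet> cross3 (cross3 (q i0 s) c) (q i0 s)" for s
  have hc: "continuous_on UNIV h" unfolding h_def[abs_def] using F_cont q_cont[OF i0]
    by (intro continuous_on_inner continuous_on_cross continuous_on_const) auto
  have "h t0 = 0"
  proof (rule FL[OF hc])
    fix a b :: real assume ab: "a < b"
    define xi where "xi i s = (if i = i0 then ((s - a) * (b - s)) *\<^sub>R cross3 (q i0 s) c else 0)" for i s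
    define xi' where "xi' i s = (if i = i0 then (a + b - 2 * s) *\<^sub>R cross3 (q i0 s) c
         + ((s - a) * (b - s)) *\<^sub>R cross3 (q' i0 s) c else 0)" for i s
    have xid: "\<forall>i\<in>{1..n}. \<forall>t. (xi i has_vector_derivative xi' i t) (at t)"
    proof (intro ballI allI)
      fix i t assume i: "i \<in> {1..n}"
      show "(xi i has_vector_derivative xi' i t) (at t)"
      proof (cases "i = i0")
        case True
        have "((\<lambda>s. cross3 (q i0 s) c) has_vector_derivative cross3 (q' i0 t) c) (at t)"
          using vd_cross[OF qd[rule_format, OF i0, of t] has_vector_derivative_const[of c], of "cross3 (q' i0 t) c"]
          by simp
        from has_vector_derivative_scaleR[OF phi_deriv[of a b t] this]
        show ?thesis using True by (simp add: xi_def[abs_def] xi'_def algebra_simps)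
      next
        case False thus ?thesis by (simp add: xi_def[abs_def] xi'_def)
      qed
    qed
    have xic: "\<forall>i\<in>{1..n}. continuous_on UNIV (xi' i)"
    proof
      fix i assume i: "i \<in> {1..n}"
      show "continuous_on UNIV (xi' i)"
      proof (cases "i = i0")
        case True
        thus ?thesis unfolding xi'_def[abs_def] using q_cont[OF i0] q'_cont[OF i0]
          by (simp, intro continuous_intros continuous_on_cross) auto
      qed (simp add: xi'_def[abs_def])
    qed
    have xiq: "\<forall>i\<in>{1..n}. \<forall>t\<in>{a..b}. xi i t \<bullet> q i t = 0"
      by (simp add: xi_def inner_commute[of "cross3 _ _"] dot_cross_self)
    have xiab: "\<forall>i\<in>{1..n}. xi i a = 0 \<and> xi i b = 0" by (simp add: xi_def)
    have p1: "\<forall>t. ((\<lambda>s. 0::real^2) has_vector_derivative 0) (at t)" by simp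
    have p3: "(\<lambda>s. 0::real^2) a = 0" "(\<lambda>s. 0::real^2) b = 0" by simp_all
    have R: "(u s - A s) \<bullet> (0::real^2) + (\<Sum>i=1..n. F i s \<bullet> cross3 (xi i s) (q i s)) = ((s - a) * (b - s)) * h s" for s
    proof -
      have "(\<Sum>i=1..n. F i s \<bullet> cross3 (xi i s) (q i s)) =
          (\<Sum>i=1..n. if i = i0 then F i0 s \<bullet> cross3 (xi i0 s) (q i0 s) else 0)"
        by (rule sum.cong) (auto simp: xi_def)
      also have "\<dots> = F i0 s \<bullet> cross3 (xi i0 s) (q i0 s)" using i0 by (simp add: sum.delta)
      finally show ?thesis by (simp add: xi_def h_def cross_mult_left)
    qed
    have Rint: "(\<lambda>s. (u s - A s) \<bullet> (0::real^2) + (\<Sum>i=1..n. F i s \<bullet> cross3 (xi i s) (q i s))) integrable_on {a..b}"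
      unfolding R
      by (intro integrable_continuous_interval continuous_on_mult continuous_on_subset[OF hc] continuous_intros) auto
    have e1: "integral {a..b} (\<lambda>t.
            deriv (\<lambda>\<epsilon>. Lag m mm l g n
                (x t + \<epsilon> *\<^sub>R 0)
                (\<lambda>i. q i t + \<epsilon> *\<^sub>R cross3 (xi i t) (q i t))
                (x' t + \<epsilon> *\<^sub>R 0)
                (\<lambda>i. q' i t + \<epsilon> *\<^sub>R (cross3 (xi' i t) (q i t) + cross3 (xi i t) (q' i t)))) 0
            + u t \<bullet> 0) = 0"
      using L[unfolded LdA_def, rule_format, of a b xi xi' "\<lambda>s. 0" "\<lambda>s. 0"] ab xid xic xiq xiab
      by simp
    note e2 = int_eq[of a b xi xi' "\<lambda>s. 0" "\<lambda>s. 0", OF ab xid p1 xiab p3 Rint]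
    from e1 e2 show "integral {a..b} (\<lambda>t. ((t - a) * (b - t)) * h t) = 0"
      unfolding R by simp
  qed
  hence "cross3 (q i0 t0) c \<bullet> cross3 (q i0 t0) c = 0" by (simp add: h_def c_def triple2)
  thus ?thesis by (simp add: c_def)
qed

lemma EL_to_LdA:
  assumes E: "\<forall>t. A t = u t \<and> (\<forall>i\<in>{1..n}. cross3 (q i t) (F i t) = 0)"
  shows "LdA m mm l g n q q' x x' u"
  unfolding LdA_def
proof (intro allI impI)
  fix a b :: real and xi xi' :: "nat \<Rightarrow> real \<Rightarrow> real^3" and dx dx' :: "real \<Rightarrow> real^2"
  assume ab: "a < b"
  assume H: "(\<forall>i\<in>{1..n}. \<forall>t. (xi i has_vector_derivative xi' i t) (at t)) \<and>
        (\<forall>i\<in>{1..n}. continuous_on UNIV (xi' i)) \<and>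
        (\<forall>t. (dx has_vector_derivative dx' t) (at t)) \<and> continuous_on UNIV dx' \<and>
        (\<forall>i\<in>{1..n}. \<forall>t\<in>{a..b}. xi i t \<bullet> q i t = 0) \<and>
        (\<forall>i\<in>{1..n}. xi i a = 0 \<and> xi i b = 0) \<and> dx a = 0 \<and> dx b = 0"
  have R: "(u s - A s) \<bullet> dx s + (\<Sum>i=1..n. F i s \<bullet> cross3 (xi i s) (q i s)) = 0" for s
  proof -
    have "F i s \<bullet> cross3 (xi i s) (q i s) = 0" if "i \<in> {1..n}" for i
      using E that triple[of "F i s" "xi i s" "q i s"] by simp
    thus ?thesis using E by simp
  qed
  have Rint: "(\<lambda>s. (u s - A s) \<bullet> dx s + (\<Sum>i=1..n. F i s \<bullet> cross3 (xi i s) (q i s))) integrable_on {a..b}"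
    unfolding R by (rule integrable_0)
  show "integral {a..b} (\<lambda>t.
            deriv (\<lambda>\<epsilon>. Lag m mm l g n
                (x t + \<epsilon> *\<^sub>R dx t)
                (\<lambda>i. q i t + \<epsilon> *\<^sub>R cross3 (xi i t) (q i t))
                (x' t + \<epsilon> *\<^sub>R dx' t)
                (\<lambda>i. q' i t + \<epsilon> *\<^sub>R (cross3 (xi' i t) (q i t) + cross3 (xi i t) (q' i t)))) 0
            + u t \<bullet> dx t) = 0"
    using int_eq[OF ab _ _ _ _ _ Rint] H unfolding R by simp
qed

lemma w_unique:
  assumes wd: "\<forall>i\<in>{1..n}. \<forall>t. (w i has_vector_derivative w' i t) (at t)"
    and wq: "\<forall>i\<in>{1..n}. \<forall>t. w i t \<bullet> q i t = 0"
    and E: "\<forall>t. EL2 m mm l g n q q' w w' x'' u t"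
  shows "\<forall>i\<in>{1..n}. w i t = cross3 (q i t) (q' i t)" "\<forall>i\<in>{1..n}. w' i t = cross3 (q i t) (q'' i t)"
proof -
  have weq: "w i s = cross3 (q i s) (q' i s)" if i: "i \<in> {1..n}" for i s
  proof -
    have "q' i s = cross3 (w i s) (q i s)" using E i unfolding EL2_def by blast
    hence "cross3 (q i s) (q' i s) = (q i s \<bullet> q i s) *\<^sub>R w i s - (q i s \<bullet> w i s) *\<^sub>R q i s"
      by (simp add: bac)
    thus ?thesis using qq[OF i] wq i by (simp add: inner_commute)
  qed
  thus "\<forall>i\<in>{1..n}. w i t = cross3 (q i t) (q' i t)" by blast
  show "\<forall>i\<in>{1..n}. w' i t = cross3 (q i t) (q'' i t)"
  proof
    fix i assume i: "i \<in> {1..n}"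
    have "w i = (\<lambda>s. cross3 (q i s) (q' i s))" using weq[OF i] by auto
    hence "(w i has_vector_derivative cross3 (q i t) (q'' i t) + cross3 (q' i t) (q' i t)) (at t)"
      using vd_cross[OF qd[rule_format, OF i, of t] qdd[rule_format, OF i, of t] refl] by simp
    moreover have "(w i has_vector_derivative w' i t) (at t)" using wd i by blast
    ultimately show "w' i t = cross3 (q i t) (q'' i t)"
      using vector_derivative_unique_at by fastforce
  qed
qed

end

theorem proposition1:
  fixes m g :: real and mm l :: "nat \<Rightarrow> real" and n :: nat
    and q q' q'' :: "nat \<Rightarrow> real \<Rightarrow> real^3"
    and x x' x'' u :: "real \<Rightarrow> real^2"
  assumes "n \<ge> 1" and "m > 0" and "g > 0"
    and "\<forall>i\<in>{1..n}. mm i > 0" and "\<forall>i\<in>{1..n}. l i > 0"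
    and "\<forall>i\<in>{1..n}. \<forall>t. norm (q i t) = 1"
    and "\<forall>i\<in>{1..n}. \<forall>t. (q i has_vector_derivative q' i t) (at t)"
    and "\<forall>i\<in>{1..n}. \<forall>t. (q' i has_vector_derivative q'' i t) (at t)"
    and "\<forall>i\<in>{1..n}. continuous_on UNIV (q'' i)"
    and "\<forall>t. (x has_vector_derivative x' t) (at t)"
    and "\<forall>t. (x' has_vector_derivative x'' t) (at t)"
    and "continuous_on UNIV x''"
    and "continuous_on UNIV u"
  shows "(LdA m mm l g n q q' x x' u \<longleftrightarrow> (\<forall>t. EL1 m mm l g n q q' q'' x'' u t)) \<and>
         ((\<forall>t. EL1 m mm l g n q q' q'' x'' u t) \<longleftrightarrow>
          (\<exists>w w' :: nat \<Rightarrow> real \<Rightarrow> real^3.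
              (\<forall>i\<in>{1..n}. \<forall>t. (w i has_vector_derivative w' i t) (at t)) \<and>
              (\<forall>i\<in>{1..n}. \<forall>t. w i t \<bullet> q i t = 0) \<and>
              (\<forall>t. EL2 m mm l g n q q' w w' x'' u t)))"
proof -
  interpret P: pend m g mm l n q q' q'' x x' x'' u
    using assms(6-13) by unfold_locales
  have part1: "LdA m mm l g n q q' x x' u \<longleftrightarrow> (\<forall>t. EL1 m mm l g n q q' q'' x'' u t)"
  proof
    assume L: "LdA m mm l g n q q' x x' u"
    show "\<forall>t. EL1 m mm l g n q q' q'' x'' u t"
      using P.LdA_to_A[OF L] P.LdA_to_F[OF L] P.EL1_iff by blast
  next
    assume "\<forall>t. EL1 m mm l g n q q' q'' x'' u t"
    thus "LdA m mm l g n q q' x x' u" using P.EL1_iff by (intro P.EL_to_LdA) blast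
  qed
  have part2: "(\<forall>t. EL1 m mm l g n q q' q'' x'' u t) \<longleftrightarrow>
          (\<exists>w w' :: nat \<Rightarrow> real \<Rightarrow> real^3.
              (\<forall>i\<in>{1..n}. \<forall>t. (w i has_vector_derivative w' i t) (at t)) \<and>
              (\<forall>i\<in>{1..n}. \<forall>t. w i t \<bullet> q i t = 0) \<and>
              (\<forall>t. EL2 m mm l g n q q' w w' x'' u t))"
  proof
    assume E: "\<forall>t. EL1 m mm l g n q q' q'' x'' u t"
    define w where "w i t = cross3 (q i t) (q' i t)" for i t
    define w' where "w' i t = cross3 (q i t) (q'' i t)" for i t
    have "\<forall>i\<in>{1..n}. \<forall>t. (w i has_vector_derivative w' i t) (at t)"
    proof (intro ballI allI)
      fix i t assume i: "i \<in> {1..n}"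
      show "(w i has_vector_derivative w' i t) (at t)"
        using vd_cross[OF assms(7)[rule_format, OF i, of t] assms(8)[rule_format, OF i, of t] refl]
        by (simp add: w_def[abs_def] w'_def)
    qed
    moreover have "\<forall>i\<in>{1..n}. \<forall>t. w i t \<bullet> q i t = 0"
      by (simp add: w_def inner_commute[of "cross3 _ _"] dot_cross_self)
    moreover have "\<forall>t. EL2 m mm l g n q q' w w' x'' u t"
    proof
      fix t
      have "EL2 m mm l g n q q' w w' x'' u t \<longleftrightarrow> P.A t = u t \<and> (\<forall>i\<in>{1..n}. cross3 (q i t) (P.F i t) = 0)"
        by (rule P.EL2_iff) (simp_all add: w_def w'_def)
      thus "EL2 m mm l g n q q' w w' x'' u t" using E P.EL1_iff by blast
    qed
    ultimately show "\<exists>w w' :: nat \<Rightarrow> real \<Rightarrow> real^3.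
              (\<forall>i\<in>{1..n}. \<forall>t. (w i has_vector_derivative w' i t) (at t)) \<and>
              (\<forall>i\<in>{1..n}. \<forall>t. w i t \<bullet> q i t = 0) \<and>
              (\<forall>t. EL2 m mm l g n q q' w w' x'' u t)" by blast
  next
    assume "\<exists>w w' :: nat \<Rightarrow> real \<Rightarrow> real^3.
              (\<forall>i\<in>{1..n}. \<forall>t. (w i has_vector_derivative w' i t) (at t)) \<and>
              (\<forall>i\<in>{1..n}. \<forall>t. w i t \<bullet> q i t = 0) \<and>
              (\<forall>t. EL2 m mm l g n q q' w w' x'' u t)"
    then obtain w w' :: "nat \<Rightarrow> real \<Rightarrow> real^3" where
      wd: "\<forall>i\<in>{1..n}. \<forall>t. (w i has_vector_derivative w' i t) (at t)"
      and wq: "\<forall>i\<in>{1..n}. \<forall>t. w i t \<bullet> q i t = 0"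
      and E: "\<forall>t. EL2 m mm l g n q q' w w' x'' u t" by blast
    show "\<forall>t. EL1 m mm l g n q q' q'' x'' u t"
    proof
      fix t
      have "EL2 m mm l g n q q' w w' x'' u t" using E by blast
      hence "P.A t = u t \<and> (\<forall>i\<in>{1..n}. cross3 (q i t) (P.F i t) = 0)"
      proof -
        have h1: "\<forall>i\<in>{1..n}. w i t = cross3 (q i t) (q' i t)" by (rule P.w_unique(1)[OF wd wq E])
        have h2: "\<forall>i\<in>{1..n}. w' i t = cross3 (q i t) (q'' i t)" by (rule P.w_unique(2)[OF wd wq E])
        show ?thesis using P.EL2_iff[of w t w', OF h1 h2] \<open>EL2 m mm l g n q q' w w' x'' u t\<close> by blast
      qed
      thus "EL1 m mm l g n q q' q'' x'' u t" using P.EL1_iff by blast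
    qed
  qed
  show ?thesis using part1 part2 by blast
qed


end
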